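(* Let $k\ge2$, $n\ge1$ be integers, let $\bar{\mathcal{P}}\in\mathbb{R}^{[k,n]}$ be a columnwise-substochastic tensor, $\mathbf{v}\in\mathbb{R}^n$ a stochastic vector and $\alpha\in[0,1)$. If $\alpha<\frac{1}{k-1}$, then the MLPPR system $(\mathbf{e}^T\mathbf{y})^{k-2}\mathbf{y}-\alpha\bar{\mathcal{P}}\mathbf{y}^{k-1}=\mathbf{v}$ has a unique nonnegative solution $\mathbf{y}\in\mathbb{R}^n_+$.
   Context: For $\mathcal{P}\in\mathbb{R}^{[k,n]}$ (real tensors of order $k$, dimension $n$) and $\mathbf{y}\in\mathbb{R}^n$, $(\mathcal{P}\mathbf{y}^{k-1})_i=\sum_{i_2,\dots,i_k}p_{i i_2\dots i_k}y_{i_2}\cdots y_{i_k}$. $\bar{\mathcal{P}}$ is columnwise-substochastic if its entries are nonnegative and $\sum_{i}\bar p_{i i_2\dots i_k}\le1$ for all $i_2,\dots,i_k$. $\mathbf{e}$ is the all-ones vector; a stochastic vector is nonnegative with entries summing to $1$. *)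

theory Defs
  imports "HOL-Analysis.Analysis"
begin

text \<open>A real tensor of order k and dimension n is represented as a function
  P :: 'n list \<Rightarrow> real on index lists, where the index type 'n is finite
  with CARD('n) = n; the entry p_{i i_2 ... i_k} is P [i, i_2, ..., i_k].
  Only lists of length k are relevant.\<close>

definition multi_indices :: "nat \<Rightarrow> ('n::finite) list set" where
  "multi_indices m = {js. length js = m}"

definition tensor_apply :: "nat \<Rightarrow> (('n::finite) list \<Rightarrow> real) \<Rightarrow> ('n \<Rightarrow> real) \<Rightarrow> 'n \<Rightarrow> real" where
  "tensor_apply k P y i = (\<Sum>js\<in>multi_indices (k - 1). P (i # js) * (\<Prod>j\<leftarrow>js. y j))"

definition columnwise_substochastic :: "nat \<Rightarrow> (('n::finite) list \<Rightarrow> real) \<Rightarrow> bool" where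
  "columnwise_substochastic k P \<longleftrightarrow>
     (\<forall>is. length is = k \<longrightarrow> 0 \<le> P is) \<and>
     (\<forall>js\<in>multi_indices (k - 1). (\<Sum>i\<in>UNIV. P (i # js)) \<le> 1)"

definition stochastic_vector :: "(('n::finite) \<Rightarrow> real) \<Rightarrow> bool" where
  "stochastic_vector v \<longleftrightarrow> (\<forall>i. 0 \<le> v i) \<and> (\<Sum>i\<in>UNIV. v i) = 1"

definition mlppr_solution :: "nat \<Rightarrow> real \<Rightarrow> (('n::finite) list \<Rightarrow> real) \<Rightarrow> ('n \<Rightarrow> real) \<Rightarrow> ('n \<Rightarrow> real) \<Rightarrow> bool" where
  "mlppr_solution k \<alpha> P v y \<longleftrightarrow>
     (\<forall>i. (\<Sum>j\<in>UNIV. y j) ^ (k - 2) * y i - \<alpha> * tensor_apply k P y i = v i)"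

end

theory Submission
  imports Defs "HOL-Analysis.Analysis"
begin

lemma mi_finite: "finite (multi_indices m :: ('n::finite) list set)"
  unfolding multi_indices_def by (rule finite_list_length)

lemma mi_Suc: "multi_indices (Suc m) = (\<lambda>(j,js). j # js) ` (UNIV \<times> (multi_indices m :: ('n::finite) list set))"
  unfolding multi_indices_def
proof (auto simp: image_def)
  fix xs :: "'n list" assume "length xs = Suc m"
  then show "\<exists>a b. length b = m \<and> xs = a # b" by (cases xs) auto
qed

lemma mi_sum_Suc:
  "(\<Sum>js\<in>multi_indices (Suc m). f js) = (\<Sum>j\<in>UNIV. \<Sum>js\<in>multi_indices m. f (j # (js::('n::finite) list)))"
proof -
  have inj: "inj_on (\<lambda>(j,js). j # js) (UNIV \<times> (multi_indices m :: 'n list set))"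
    by (auto simp: inj_on_def)
  have "(\<Sum>js\<in>multi_indices (Suc m). f js) = (\<Sum>p\<in>UNIV \<times> multi_indices m. f ((\<lambda>(j,js). j # js) p))"
    unfolding mi_Suc by (rule sum.reindex[OF inj, unfolded comp_def])
  also have "\<dots> = (\<Sum>j\<in>UNIV. \<Sum>js\<in>multi_indices m. f (j # js))"
    by (simp add: sum.cartesian_product split_def)
  finally show ?thesis .
qed

lemma mi_zero: "multi_indices 0 = {[]}"
  unfolding multi_indices_def by auto

lemma sum_prod_list: "(\<Sum>js\<in>multi_indices m. prod_list (map (a::('n::finite) \<Rightarrow> real) js)) = (\<Sum>j\<in>UNIV. a j) ^ m"
proof (induction m)
  case 0 then show ?case by (simp add: mi_zero)
next
  case (Suc m)
  show ?case by (simp add: mi_sum_Suc Suc sum_distrib_left[symmetric] sum_distrib_right[symmetric])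
qed

lemma prod_list_scale: "prod_list (map (\<lambda>j. c * (x j :: real)) js) = c ^ length js * prod_list (map x js)"
  by (induction js) (auto simp: algebra_simps)

lemma prod_list_nonneg: "(\<And>j. 0 \<le> (x j :: real)) \<Longrightarrow> 0 \<le> prod_list (map x js)"
  by (induction js) auto

lemma tensor_scale:
  "tensor_apply k P (\<lambda>j. c * x j) i = c ^ (k - 1) * tensor_apply k P x i"
  unfolding tensor_apply_def multi_indices_def
  by (simp add: prod_list_scale sum_distrib_left algebra_simps)

lemma tensor_nonneg:
  fixes P :: "('n::finite) list \<Rightarrow> real"
  assumes "k \<ge> 1" "columnwise_substochastic k P" "\<And>j. 0 \<le> x j"
  shows "0 \<le> tensor_apply k P x i"
  unfolding tensor_apply_def
proof (rule sum_nonneg)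
  fix js :: "'n list" assume "js \<in> multi_indices (k - 1)"
  then have "length (i # js) = k" using assms(1) by (simp add: multi_indices_def)
  then have "0 \<le> P (i # js)" using assms(2) by (simp add: columnwise_substochastic_def)
  moreover have "0 \<le> prod_list (map x js)" by (rule prod_list_nonneg) (rule assms(3))
  ultimately show "0 \<le> P (i # js) * prod_list (map x js)" by simp
qed

lemma tensor_sum_le:
  fixes P :: "('n::finite) list \<Rightarrow> real"
  assumes "k \<ge> 1" "columnwise_substochastic k P" "\<And>j. 0 \<le> x j"
  shows "(\<Sum>i\<in>UNIV. tensor_apply k P x i) \<le> (\<Sum>j\<in>UNIV. x j) ^ (k - 1)"
proof -
  have "(\<Sum>i\<in>UNIV. tensor_apply k P x i) = (\<Sum>js\<in>multi_indices (k - 1). (\<Sum>i\<in>UNIV. P (i # js)) * prod_list (map x js))"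
    unfolding tensor_apply_def by (simp add: sum.swap[of _ UNIV] sum_distrib_right)
  also have "\<dots> \<le> (\<Sum>js\<in>multi_indices (k - 1). prod_list (map x js))"
  proof (rule sum_mono)
    fix js :: "'n list" assume "js \<in> multi_indices (k - 1)"
    then have "(\<Sum>i\<in>UNIV. P (i # js)) \<le> 1" using assms(2) by (simp add: columnwise_substochastic_def)
    then show "(\<Sum>i\<in>UNIV. P (i # js)) * prod_list (map x js) \<le> prod_list (map x js)"
      using prod_list_nonneg[of x js] assms(3) mult_right_mono[of _ 1 "prod_list (map x js)"] by simp
  qed
  also have "\<dots> = (\<Sum>j\<in>UNIV. x j) ^ (k - 1)" by (rule sum_prod_list)
  finally show ?thesis .
qed

fun G :: "('n \<Rightarrow> real) \<Rightarrow> ('n \<Rightarrow> real) \<Rightarrow> 'n list \<Rightarrow> real" where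
  "G a b [] = 0"
| "G a b (j # js) = max 0 (b j - a j) * prod_list (map a js) + b j * G a b js"

lemma G_nonneg:
  assumes "\<And>j. 0 \<le> a j" "\<And>j. 0 \<le> b j"
  shows "0 \<le> G a b js"
proof (induction js)
  case Nil then show ?case by simp
next
  case (Cons j js)
  have "0 \<le> prod_list (map a js)" by (rule prod_list_nonneg) (rule assms(1))
  then show ?case using Cons assms(2)[of j] by simp
qed

lemma G_bound:
  assumes "\<And>j. 0 \<le> a j" "\<And>j. 0 \<le> b j"
  shows "prod_list (map b js) - prod_list (map a js) \<le> G a b js"
proof (induction js)
  case Nil then show ?case by simp
next
  case (Cons j js)
  have pa: "0 \<le> prod_list (map a js)" by (rule prod_list_nonneg) (rule assms(1))
  have "prod_list (map b (j # js)) - prod_list (map a (j # js))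
      = b j * (prod_list (map b js) - prod_list (map a js)) + (b j - a j) * prod_list (map a js)"
    by (simp add: algebra_simps)
  also have "\<dots> \<le> b j * G a b js + max 0 (b j - a j) * prod_list (map a js)"
    apply (rule add_mono)
     apply (rule mult_left_mono[OF Cons assms(2)])
    apply (rule mult_right_mono[OF _ pa])
    by simp
  finally show ?case by simp
qed

lemma G_sum:
  fixes a b :: "('n::finite) \<Rightarrow> real"
  assumes "(\<Sum>j\<in>UNIV. a j) = 1" "(\<Sum>j\<in>UNIV. b j) = 1"
  shows "(\<Sum>js\<in>multi_indices m. G a b js) = real m * (\<Sum>j\<in>UNIV. max 0 (b j - a j))"
proof (induction m)
  case 0 then show ?case by (simp add: mi_zero)
next
  case (Suc m)
  have "(\<Sum>js\<in>multi_indices (Suc m). G a b js)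
      = (\<Sum>j\<in>UNIV. max 0 (b j - a j) * (\<Sum>js\<in>multi_indices m. prod_list (map a js))
           + b j * (\<Sum>js\<in>multi_indices m. G a b js))"
    by (simp add: mi_sum_Suc sum.distrib sum_distrib_left)
  also have "\<dots> = (\<Sum>j\<in>UNIV. max 0 (b j - a j)) + (\<Sum>j\<in>UNIV. b j) * (real m * (\<Sum>j\<in>UNIV. max 0 (b j - a j)))"
    by (simp add: sum_prod_list assms(1) Suc sum.distrib sum_distrib_right)
  also have "\<dots> = real (Suc m) * (\<Sum>j\<in>UNIV. max 0 (b j - a j))"
    using assms(2) by (simp add: algebra_simps)
  finally show ?case .
qed

lemma core_unique:
  fixes P :: "('n::finite) list \<Rightarrow> real" and x x' v :: "'n \<Rightarrow> real"
  assumes k: "k \<ge> 1" and cs: "columnwise_substochastic k P"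
    and x0: "\<And>j. 0 \<le> x j" and x'0: "\<And>j. 0 \<le> x' j"
    and xs: "(\<Sum>j\<in>UNIV. x j) = 1" and x's: "(\<Sum>j\<in>UNIV. x' j) = 1"
    and v0: "\<And>j. 0 \<le> v j" and a0: "0 \<le> \<alpha>" and ak: "\<alpha> * (real k - 1) < 1"
    and ll: "lam' \<le> lam"
    and ex: "\<And>i. x i - \<alpha> * tensor_apply k P x i = lam * v i"
    and ex': "\<And>i. x' i - \<alpha> * tensor_apply k P x' i = lam' * v i"
  shows "x = x'"
proof -
  define p where "p = (\<Sum>j\<in>UNIV. max 0 (x' j - x j))"
  define H where "H i = (\<Sum>js\<in>multi_indices (k - 1). P (i # js) * G x x' js)" for i
  have Pnn: "0 \<le> P (i # js)" if "js \<in> multi_indices (k - 1)" for i js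
    using that k cs by (simp add: multi_indices_def columnwise_substochastic_def)
  have Gnn: "0 \<le> G x x' js" for js by (rule G_nonneg) (rule x0, rule x'0)
  have Gb: "prod_list (map x' js) - prod_list (map x js) \<le> G x x' js" for js
    by (rule G_bound) (rule x0, rule x'0)
  have step1: "max 0 (x' i - x i) \<le> \<alpha> * H i" for i
  proof -
    have "x' i - x i = \<alpha> * (tensor_apply k P x' i - tensor_apply k P x i) - (lam - lam') * v i"
      using ex[of i] ex'[of i] by (simp add: algebra_simps)
    also have "\<dots> \<le> \<alpha> * (tensor_apply k P x' i - tensor_apply k P x i)"
      using ll v0[of i] by simp
    also have "tensor_apply k P x' i - tensor_apply k P x i
       = (\<Sum>js\<in>multi_indices (k - 1). P (i # js) * (prod_list (map x' js) - prod_list (map x js)))"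
      unfolding tensor_apply_def by (simp add: sum_subtractf algebra_simps)
    also have "\<dots> \<le> H i"
      unfolding H_def
      by (rule sum_mono, rule mult_left_mono[OF Gb Pnn])
    finally have a: "x' i - x i \<le> \<alpha> * H i" using a0 by (simp add: mult_left_mono)
    have "0 \<le> H i" unfolding H_def
      by (rule sum_nonneg, rule mult_nonneg_nonneg[OF Pnn Gnn])
    then have "0 \<le> \<alpha> * H i" using a0 by simp
    with a show ?thesis by simp
  qed
  have "(\<Sum>i\<in>UNIV. H i) = (\<Sum>js\<in>multi_indices (k - 1). (\<Sum>i\<in>UNIV. P (i # js)) * G x x' js)"
    unfolding H_def by (simp add: sum.swap[of _ UNIV] sum_distrib_right)
  also have "\<dots> \<le> (\<Sum>js\<in>multi_indices (k - 1). G x x' js)"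
  proof (rule sum_mono)
    fix js :: "'n list" assume "js \<in> multi_indices (k - 1)"
    then have "(\<Sum>i\<in>UNIV. P (i # js)) \<le> 1" using cs by (simp add: columnwise_substochastic_def)
    then show "(\<Sum>i\<in>UNIV. P (i # js)) * G x x' js \<le> G x x' js"
      using Gnn[of js] mult_right_mono[of _ 1 "G x x' js"] by simp
  qed
  also have "\<dots> = real (k - 1) * p" unfolding p_def by (rule G_sum[OF xs x's])
  finally have Hs: "(\<Sum>i\<in>UNIV. H i) \<le> real (k - 1) * p" .
  have "p \<le> \<alpha> * (\<Sum>i\<in>UNIV. H i)"
    unfolding p_def sum_distrib_left by (rule sum_mono, rule step1)
  also have "\<dots> \<le> \<alpha> * (real (k - 1) * p)" using Hs a0 by (simp add: mult_left_mono)
  finally have pp: "p \<le> (\<alpha> * (real k - 1)) * p" using k by (simp add: of_nat_diff)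
  have p0: "0 \<le> p" unfolding p_def by (rule sum_nonneg) simp
  have "p = 0"
  proof (rule ccontr)
    assume "p \<noteq> 0"
    with p0 have "0 < p" by simp
    then have "(\<alpha> * (real k - 1)) * p < 1 * p" using ak by (intro mult_strict_right_mono)
    with pp show False by simp
  qed
  then have "\<forall>j\<in>UNIV. max 0 (x' j - x j) = 0"
    unfolding p_def by (subst sum_nonneg_eq_0_iff[symmetric]) auto
  then have le: "x' j \<le> x j" for j by (metis UNIV_I max.absorb_iff1 max.commute diff_le_0_iff_le)
  have "(\<Sum>j\<in>UNIV. x j - x' j) = 0" using xs x's by (simp add: sum_subtractf)
  then have "\<forall>j\<in>UNIV. x j - x' j = 0" using le by (subst sum_nonneg_eq_0_iff[symmetric]) auto
  then show ?thesis by auto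
qed

lemma cont_prod_list:
  "continuous_on S (\<lambda>z::real^'n. prod_list (map (\<lambda>j. z $ j) js))"
  by (induction js) (auto intro!: continuous_intros)

lemma cont_tensor:
  "continuous_on S (\<lambda>z::real^'n::finite. tensor_apply k P (\<lambda>j. z $ j) i)"
  unfolding tensor_apply_def
  by (intro continuous_intros cont_prod_list)

lemma exists_fp:
  fixes P :: "('n::finite) list \<Rightarrow> real" and v :: "'n \<Rightarrow> real"
  assumes k: "k \<ge> 1" and cs: "columnwise_substochastic k P"
    and sv: "stochastic_vector v" and a0: "0 \<le> \<alpha>" and a1: "\<alpha> < 1"
  shows "\<exists>x. (\<forall>j. 0 \<le> x j) \<and> (\<Sum>j\<in>UNIV. x j) = 1 \<and>
     (\<forall>i. x i = (1 - \<alpha> * (\<Sum>l\<in>UNIV. tensor_apply k P x l)) * v i + \<alpha> * tensor_apply k P x i)"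
proof -
  define S where "S = {z::real^'n. (\<forall>i. 0 \<le> z$i) \<and> (\<Sum>i\<in>UNIV. z$i) = 1}"
  define F where "F z = (\<chi> i. (1 - \<alpha> * (\<Sum>l\<in>UNIV. tensor_apply k P (\<lambda>j. z $ j) l)) * v i
       + \<alpha> * tensor_apply k P (\<lambda>j. z $ j) i)" for z :: "real^'n"
  have v0: "0 \<le> v i" for i using sv by (simp add: stochastic_vector_def)
  have vs: "(\<Sum>i\<in>UNIV. v i) = 1" using sv by (simp add: stochastic_vector_def)
  have closedS: "closed S"
  proof -
    have "S = {z::real^'n. \<forall>i. 0 \<le> z$i} \<inter> {z. (\<Sum>i\<in>UNIV. z$i) = 1}" unfolding S_def by auto
    moreover have "closed {z::real^'n. (\<Sum>i\<in>UNIV. z$i) = 1}"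
      by (intro closed_Collect_eq continuous_intros)
    ultimately show ?thesis using closed_positive_orthant by auto
  qed
  have boundedS: "bounded S"
    unfolding bounded_iff
  proof (intro exI ballI)
    fix z assume "z \<in> S"
    then have "norm z \<le> (\<Sum>i\<in>UNIV. \<bar>z$i\<bar>)" "(\<Sum>i\<in>UNIV. \<bar>z$i\<bar>) = 1"
      using norm_le_l1_cart[of z] unfolding S_def by auto
    then show "norm z \<le> 1" by simp
  qed
  have compS: "compact S" using closedS boundedS by (simp add: compact_eq_bounded_closed)
  have convS: "convex S"
    unfolding convex_def S_def
    by (auto simp: sum.distrib sum_distrib_left[symmetric])
  have vS: "(\<chi> i. v i) \<in> S" unfolding S_def using v0 vs by simp
  have contF: "continuous_on S F"
    unfolding F_def by (intro continuous_intros cont_tensor)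
  have FS: "F \<in> S \<rightarrow> S"
  proof
    fix z assume z: "z \<in> S"
    define x where "x j = z $ j" for j
    have x0: "\<And>j. 0 \<le> x j" using z unfolding S_def x_def by auto
    have xs: "(\<Sum>j\<in>UNIV. x j) = 1" using z unfolding S_def x_def by auto
    define g where "g = (\<Sum>l\<in>UNIV. tensor_apply k P x l)"
    have g1: "g \<le> 1" using tensor_sum_le[of k P x, OF k cs x0] xs unfolding g_def by simp
    have Tnn: "0 \<le> tensor_apply k P x i" for i by (rule tensor_nonneg[OF k cs]) (rule x0)
    have "0 \<le> 1 - \<alpha> * g" using g1 a0 a1
      by (smt (verit) mult_left_le_one_le mult_nonneg_nonneg sum_nonneg Tnn g_def)
    then have "0 \<le> (1 - \<alpha> * g) * v i + \<alpha> * tensor_apply k P x i" for i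
      using v0[of i] Tnn[of i] a0 by simp
    moreover have "(\<Sum>i\<in>UNIV. (1 - \<alpha> * g) * v i + \<alpha> * tensor_apply k P x i) = 1"
      by (simp add: sum.distrib sum_distrib_left[symmetric] vs g_def)
    ultimately show "F z \<in> S"
      unfolding S_def F_def by (simp add: x_def[abs_def] g_def)
  qed
  obtain z where "z \<in> S" "F z = z" using brouwer[OF compS convS _ contF FS] vS by blast
  then show ?thesis
    apply (intro exI[of _ "\<lambda>j. z $ j"])
    unfolding S_def F_def
    by (auto simp: vec_eq_iff)
qed

lemma normalize:
  fixes P :: "('n::finite) list \<Rightarrow> real" and v y :: "'n \<Rightarrow> real"
  assumes k: "k \<ge> 2" and cs: "columnwise_substochastic k P"
    and sv: "stochastic_vector v" and y0: "\<forall>i. 0 \<le> y i" and sol: "mlppr_solution k \<alpha> P v y"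
  shows "(\<Sum>j\<in>UNIV. y j) > 0 \<and> (\<forall>i. y i / (\<Sum>j\<in>UNIV. y j) - \<alpha> * tensor_apply k P (\<lambda>j. y j / (\<Sum>j\<in>UNIV. y j)) i
      = (1 / (\<Sum>j\<in>UNIV. y j) ^ (k - 1)) * v i)"
proof -
  define s where "s = (\<Sum>j\<in>UNIV. y j)"
  have eq: "s ^ (k - 2) * y i - \<alpha> * tensor_apply k P y i = v i" for i
    using sol unfolding mlppr_solution_def s_def by simp
  have s0: "0 \<le> s" unfolding s_def using y0 by (simp add: sum_nonneg)
  have "s \<noteq> 0"
  proof
    assume "s = 0"
    then have yz: "y i = 0" for i using y0 unfolding s_def
      by (subst (asm) sum_nonneg_eq_0_iff) auto
    have yeq: "y = (\<lambda>j. 0 * y j)" using yz by auto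
    have "tensor_apply k P y i = 0" for i
      by (subst yeq, subst tensor_scale) (use k in simp)
    then have "v i = 0" for i using eq[of i] yz[of i] by simp
    then show False using sv by (simp add: stochastic_vector_def)
  qed
  with s0 have sp: "0 < s" by simp
  have ys: "y = (\<lambda>j. s * (y j / s))" using sp by auto
  have "s ^ (k - 1) * (y i / s - \<alpha> * tensor_apply k P (\<lambda>j. y j / s) i) = v i" for i
  proof -
    have "tensor_apply k P y i = s ^ (k - 1) * tensor_apply k P (\<lambda>j. y j / s) i"
      by (subst ys, subst tensor_scale) simp
    moreover have "s ^ (k - 2) * y i = s ^ (k - 1) * (y i / s)"
    proof -
      have "s ^ (k - 1) = s ^ (k - 2) * s" using k
        by (metis Suc_diff_Suc Suc_1 diff_Suc_1 le_eq_less_or_eq less_2_cases_iff nat_less_le power_Suc2 Suc_le_lessD)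
      then show ?thesis using sp by simp
    qed
    ultimately show ?thesis using eq[of i] by (simp add: algebra_simps)
  qed
  then have "y i / s - \<alpha> * tensor_apply k P (\<lambda>j. y j / s) i = (1 / s ^ (k - 1)) * v i" for i
    using sp by (simp add: field_simps)
  then show ?thesis using sp unfolding s_def by simp
qed

theorem corollary3p16:
  fixes k :: nat and P :: "('n::finite) list \<Rightarrow> real" and v :: "'n \<Rightarrow> real" and \<alpha> :: real
  assumes "k \<ge> 2"
    and "columnwise_substochastic k P"
    and "stochastic_vector v"
    and "0 \<le> \<alpha>" and "\<alpha> < 1"
    and "\<alpha> < 1 / (real k - 1)"
  shows "\<exists>!y. (\<forall>i. 0 \<le> y i) \<and> mlppr_solution k \<alpha> P v y"
proof -
  note k = assms(1) and cs = assms(2) and sv = assms(3) and a0 = assms(4) and a1 = assms(5)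
  have k1: "k \<ge> 1" using k by simp
  have km: "real k - 1 > 0" using k by simp
  have ak: "\<alpha> * (real k - 1) < 1" using assms(6) km by (simp add: less_divide_eq)
  have v0: "\<And>j. 0 \<le> v j" using sv by (simp add: stochastic_vector_def)
  obtain x where x0: "\<forall>j. 0 \<le> x j" and xs: "(\<Sum>j\<in>UNIV. x j) = 1"
    and xfp: "\<forall>i. x i = (1 - \<alpha> * (\<Sum>l\<in>UNIV. tensor_apply k P x l)) * v i + \<alpha> * tensor_apply k P x i"
    using exists_fp[OF k1 cs sv a0 a1] by blast
  define g where "g = (\<Sum>l\<in>UNIV. tensor_apply k P x l)"
  define \<mu> where "\<mu> = 1 - \<alpha> * g"
  have g1: "g \<le> 1" using tensor_sum_le[of k P x, OF k1 cs] x0 xs unfolding g_def by simp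
  have "\<alpha> * g \<le> \<alpha>" using g1 a0 by (simp add: mult_left_le)
  then have mu: "0 < \<mu>" unfolding \<mu>_def using a1 by simp
  define s where "s = root (k - 1) (1 / \<mu>)"
  have sp: "0 < s" unfolding s_def using mu k by simp
  have sk: "s ^ (k - 1) = 1 / \<mu>" unfolding s_def using mu k by simp
  define y where "y j = s * x j" for j
  have ysol: "mlppr_solution k \<alpha> P v y"
    unfolding mlppr_solution_def
  proof
    fix i
    have sy: "(\<Sum>j\<in>UNIV. y j) = s" unfolding y_def using xs by (simp add: sum_distrib_left[symmetric])
    have "s ^ (k - 1) = s ^ (k - 2) * s" using k
      by (metis Suc_diff_Suc Suc_1 diff_Suc_1 le_eq_less_or_eq less_2_cases_iff nat_less_le power_Suc2 Suc_le_lessD)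
    then have "s ^ (k - 2) * y i - \<alpha> * tensor_apply k P y i = s ^ (k - 1) * (x i - \<alpha> * tensor_apply k P x i)"
      unfolding y_def[abs_def] by (simp add: tensor_scale algebra_simps)
    also have "x i - \<alpha> * tensor_apply k P x i = \<mu> * v i"
      using xfp[rule_format, of i] unfolding \<mu>_def g_def by simp
    finally show "(\<Sum>j\<in>UNIV. y j) ^ (k - 2) * y i - \<alpha> * tensor_apply k P y i = v i"
      using sy sk mu by simp
  qed
  have y0: "\<forall>i. 0 \<le> y i" unfolding y_def using x0 sp by simp
  have uniq: "y1 = y2" if h1: "(\<forall>i. 0 \<le> y1 i) \<and> mlppr_solution k \<alpha> P v y1"
    and h2: "(\<forall>i. 0 \<le> y2 i) \<and> mlppr_solution k \<alpha> P v y2" for y1 y2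
  proof -
    define s1 where "s1 = (\<Sum>j\<in>UNIV. y1 j)"
    define s2 where "s2 = (\<Sum>j\<in>UNIV. y2 j)"
    define x1 where "x1 j = y1 j / s1" for j
    define x2 where "x2 j = y2 j / s2" for j
    have n1: "0 < s1" "\<And>i. x1 i - \<alpha> * tensor_apply k P x1 i = (1 / s1 ^ (k - 1)) * v i"
      using normalize[OF k cs sv] h1 unfolding s1_def x1_def[abs_def] by auto
    have n2: "0 < s2" "\<And>i. x2 i - \<alpha> * tensor_apply k P x2 i = (1 / s2 ^ (k - 1)) * v i"
      using normalize[OF k cs sv] h2 unfolding s2_def x2_def[abs_def] by auto
    have x10: "\<And>j. 0 \<le> x1 j" using h1 n1(1) unfolding x1_def by simp
    have x20: "\<And>j. 0 \<le> x2 j" using h2 n2(1) unfolding x2_def by simp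
    have x1s: "(\<Sum>j\<in>UNIV. x1 j) = 1" using n1(1) unfolding x1_def s1_def
      by (simp add: sum_divide_distrib[symmetric])
    have x2s: "(\<Sum>j\<in>UNIV. x2 j) = 1" using n2(1) unfolding x2_def s2_def
      by (simp add: sum_divide_distrib[symmetric])
    have xx: "x1 = x2"
    proof (cases "1 / s2 ^ (k - 1) \<le> 1 / s1 ^ (k - 1)")
      case True
      show ?thesis by (rule core_unique[OF k1 cs x10 x20 x1s x2s v0 a0 ak True n1(2) n2(2)])
    next
      case False
      then have "1 / s1 ^ (k - 1) \<le> 1 / s2 ^ (k - 1)" by simp
      from core_unique[OF k1 cs x20 x10 x2s x1s v0 a0 ak this n2(2) n1(2)] show ?thesis by simp
    qed
    obtain i where vi: "v i \<noteq> 0"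
      using sv by (metis (mono_tags) stochastic_vector_def sum.neutral zero_neq_one)
    have "(1 / s1 ^ (k - 1)) * v i = (1 / s2 ^ (k - 1)) * v i" using n1(2)[of i] n2(2)[of i] xx by (metis (no_types))
    then have "s1 ^ (k - 1) = s2 ^ (k - 1)" using vi n1(1) n2(1) by simp
    then have ss: "s1 = s2" using n1(1) n2(1) k by (simp add: power_eq_iff_eq_base)
    show "y1 = y2"
    proof
      fix j
      have "y1 j = s1 * x1 j" "y2 j = s2 * x2 j" unfolding x1_def x2_def using n1(1) n2(1) by auto
      then show "y1 j = y2 j" using ss xx by simp
    qed
  qed
  show ?thesis using y0 ysol uniq by blast
qed

end
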